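(* Let $y_i=\theta_i+\sigma z_i$, $i=1,\dots,n$, where $z_1,\dots,z_n$ are i.i.d. sub-Gaussian with parameter $1$, and let $\alpha_1,\dots,\alpha_k$ denote the Haar wavelet coefficients of the vector $pad_0(y_1,\dots,y_n)\in\mathbb{R}^k$, i.e. $\alpha=H\,pad_0(y_1,\dots,y_n)$. Then each $\alpha_i-\mathbb{E}[\alpha_i]$ is sub-Gaussian with parameter $2\sigma$.
   Context: $pad_0(y_1,\dots,y_n)$ is the vector $(y_1-\bar y,\dots,y_n-\bar y)$, $\bar y=\frac1n\sum_i y_i$, followed by zeros up to length $k$, the smallest power of $2$ that is $\ge n$. $H\in\mathbb{R}^{k\times k}$ is the orthonormal discrete Haar wavelet transform matrix. *)

theory Defs
  imports "HOL-Probability.Probability"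
begin

text \<open>Sub-Gaussian random variable with parameter s (centered convention):
  E[exp(l X)] \<le> exp(l^2 s^2 / 2) for all real l.\<close>
definition subgaussian :: "'a measure \<Rightarrow> ('a \<Rightarrow> real) \<Rightarrow> real \<Rightarrow> bool" where
  "subgaussian M X s \<longleftrightarrow> X \<in> borel_measurable M \<and>
     (\<forall>l::real. integrable M (\<lambda>\<omega>. exp (l * X \<omega>)) \<and>
        (\<integral>\<omega>. exp (l * X \<omega>) \<partial>M) \<le> exp (l^2 * s^2 / 2))"

definition padlen :: "nat \<Rightarrow> nat" where
  "padlen n = (LEAST k. (\<exists>m. k = 2^m) \<and> n \<le> k)"

definition pad0 :: "nat \<Rightarrow> (nat \<Rightarrow> real) \<Rightarrow> nat \<Rightarrow> real" where
  "pad0 n y t = (if t < n then y t - (\<Sum>j<n. y j) / real n else 0)"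

definition haar_level :: "nat \<Rightarrow> nat" where
  "haar_level i = (GREATEST j. 2^j \<le> i)"

text \<open>Row 0 is the scaling vector; row 2^j + l (0 \<le> l < 2^j) is the
  wavelet at level j and shift l, supported on [l 2^(m-j), (l+1) 2^(m-j)).\<close>
definition haar_mat :: "nat \<Rightarrow> nat \<Rightarrow> nat \<Rightarrow> real" where
  "haar_mat m i t =
     (if i = 0 then 1 / sqrt (2 ^ m)
      else (let j = haar_level i; l = i - 2^j; L = 2^(m - j); h = L div 2 in
            if l * L \<le> t \<and> t < l * L + h then sqrt (2 ^ j / 2 ^ m)
            else if l * L + h \<le> t \<and> t < (l + 1) * L then - sqrt (2 ^ j / 2 ^ m)
            else 0))"

end

theory Submission
  imports Defs
begin


lemma subg_sum:
  fixes M :: "'a measure" and z :: "nat \<Rightarrow> 'a \<Rightarrow> real"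
  assumes P: "prob_space M" and fin: "finite I"
    and ind: "prob_space.indep_vars M (\<lambda>_. borel) z I"
    and sg: "\<And>i. i \<in> I \<Longrightarrow> subgaussian M (z i) 1"
    and S: "(\<Sum>i\<in>I. (a i)^2) \<le> S^2"
  shows "subgaussian M (\<lambda>\<omega>. \<Sum>i\<in>I. a i * z i \<omega>) S"
proof -
  interpret prob_space M by fact
  have meas: "\<And>i. i \<in> I \<Longrightarrow> z i \<in> borel_measurable M" using sg by (simp add: subgaussian_def)
  have ind2: "indep_vars (\<lambda>_. borel) (\<lambda>i \<omega>. exp ((l * a i) * z i \<omega>)) I" for l
    by (rule indep_vars_compose2[OF ind]) auto
  have int1: "\<And>i. i \<in> I \<Longrightarrow> integrable M (\<lambda>\<omega>. exp ((l * a i) * z i \<omega>))" for l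
    using sg by (simp add: subgaussian_def)
  have bnd: "\<And>i. i \<in> I \<Longrightarrow> (\<integral>\<omega>. exp ((l * a i) * z i \<omega>) \<partial>M) \<le> exp ((l * a i)^2 * 1^2 / 2)" for l
    using sg by (simp add: subgaussian_def)
  have eq: "exp (l * (\<Sum>i\<in>I. a i * z i \<omega>)) = (\<Prod>i\<in>I. exp ((l * a i) * z i \<omega>))" for l \<omega>
    using fin by (simp add: exp_sum[symmetric] sum_distrib_left mult.assoc)
  show ?thesis unfolding subgaussian_def
  proof (intro conjI allI)
    show "(\<lambda>\<omega>. \<Sum>i\<in>I. a i * z i \<omega>) \<in> borel_measurable M"
      using meas by (intro borel_measurable_sum borel_measurable_times) auto
  next
    fix l :: real
    show "integrable M (\<lambda>\<omega>. exp (l * (\<Sum>i\<in>I. a i * z i \<omega>)))"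
      unfolding eq by (rule indep_vars_integrable[OF fin ind2 int1])
    have "(\<integral>\<omega>. exp (l * (\<Sum>i\<in>I. a i * z i \<omega>)) \<partial>M) = (\<Prod>i\<in>I. \<integral>\<omega>. exp ((l * a i) * z i \<omega>) \<partial>M)"
      unfolding eq by (rule indep_vars_lebesgue_integral[OF fin ind2 int1])
    also have "\<dots> \<le> (\<Prod>i\<in>I. exp ((l * a i)^2 * 1^2 / 2))"
      by (intro prod_mono conjI bnd) auto
    also have "\<dots> = exp (l^2 * (\<Sum>i\<in>I. (a i)^2) / 2)"
      using fin by (simp add: exp_sum[symmetric] sum_distrib_left sum_divide_distrib power_mult_distrib)
    also have "\<dots> \<le> exp (l^2 * S^2 / 2)"
      using S by (simp add: mult_left_mono)
    finally show "(\<integral>\<omega>. exp (l * (\<Sum>i\<in>I. a i * z i \<omega>)) \<partial>M) \<le> exp (l^2 * S^2 / 2)" .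
  qed
qed

lemma subg_mean0:
  assumes P: "prob_space M" and sg: "subgaussian M X 1"
  shows "integrable M X" "(\<integral>\<omega>. X \<omega> \<partial>M) = 0"
proof -
  interpret prob_space M by fact
  have meas: "X \<in> borel_measurable M" using sg by (simp add: subgaussian_def)
  have i1: "integrable M (\<lambda>\<omega>. exp (1 * X \<omega>))" and i2: "integrable M (\<lambda>\<omega>. exp ((-1) * X \<omega>))"
    using sg unfolding subgaussian_def by (metis mult_1, metis)
  show iX: "integrable M X"
  proof (rule Bochner_Integration.integrable_bound[of _ "\<lambda>\<omega>. exp (1 * X \<omega>) + exp ((-1) * X \<omega>)"])
    show "integrable M (\<lambda>\<omega>. exp (1 * X \<omega>) + exp ((-1) * X \<omega>))" using i1 i2 by simp
    show "X \<in> borel_measurable M" by fact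
    show "AE x in M. norm (X x) \<le> norm (exp (1 * X x) + exp ((-1) * X x))"
    proof (intro AE_I2)
      fix x
      have "0 < exp (X x)" "0 < exp (- X x)" by simp_all
      moreover have "X x \<le> exp (X x)" "- X x \<le> exp (- X x)"
        using exp_ge_add_one_self[of "X x"] exp_ge_add_one_self[of "- X x"] by linarith+
      ultimately show "norm (X x) \<le> norm (exp (1 * X x) + exp ((-1) * X x))"
        by (simp only: real_norm_def mult_1 mult_minus1)
    qed
  qed
  define e where "e = (\<integral>\<omega>. X \<omega> \<partial>M)"
  have "exp (\<integral>\<omega>. e * X \<omega> \<partial>M) \<le> (\<integral>\<omega>. exp (e * X \<omega>) \<partial>M)"
    by (rule jensens_inequality[where I=UNIV]) (use iX sg exp_convex in \<open>auto simp: subgaussian_def\<close>)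
  also have "\<dots> \<le> exp (e^2 * 1^2 / 2)" using sg by (simp add: subgaussian_def)
  finally have "e * e \<le> e^2 / 2" by (simp add: e_def)
  then have "e * e \<le> 0" by (simp add: power2_eq_square)
  then have "e = 0" by (metis mult_eq_0_iff not_real_square_gt_zero order_le_less_trans less_irrefl order.order_iff_strict)
  then show "(\<integral>\<omega>. X \<omega> \<partial>M) = 0" by (simp add: e_def)
qed


lemma padlen_ge: "n \<le> padlen n"
proof -
  have "(\<exists>m. 2^n = (2::nat)^m) \<and> n \<le> 2^n" by (auto intro: less_imp_le)
  then show ?thesis unfolding padlen_def by (rule LeastI2) auto
qed

lemma var_le:
  fixes a :: "nat \<Rightarrow> real" assumes "n \<ge> 1"
  shows "(\<Sum>t<n. (a t - (\<Sum>s<n. a s) / real n)^2) \<le> (\<Sum>t<n. (a t)^2)"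
proof -
  define T where "T = (\<Sum>s<n. a s)"
  define c where "c = T / real n"
  have "(\<Sum>t<n. (a t - c)^2) = (\<Sum>t<n. (a t)^2) - 2 * c * T + real n * c^2"
    by (simp add: power2_diff sum.distrib sum_subtractf sum_distrib_left T_def algebra_simps)
  moreover have "- 2 * c * T + real n * c^2 = - (T^2 / real n)"
    using assms by (simp add: c_def power2_eq_square field_simps)
  moreover have "T^2 / real n \<ge> 0" by simp
  ultimately show ?thesis by (simp add: c_def T_def)
qed

lemma haar_level_props:
  assumes "i \<ge> 1" shows "2 ^ haar_level i \<le> i"
proof -
  have "2 ^ (GREATEST j. (2::nat)^j \<le> i) \<le> i"
  proof (rule GreatestI_nat[of _ 0 i])
    show "(2::nat)^0 \<le> i" using assms by simp
    show "y \<le> i" if "(2::nat) ^ y \<le> i" for y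
    proof -
      note that
      moreover have "y < 2 ^ y" by (rule less_exp)
      ultimately show "y \<le> i" by linarith
    qed
  qed
  then show ?thesis by (simp add: haar_level_def)
qed

lemma row_norm:
  assumes "i < 2 ^ m"
  shows "(\<Sum>t<2^m. (haar_mat m i t)^2) \<le> 1"
proof (cases "i = 0")
  case True
  have "(haar_mat m i t)^2 = 1 / 2^m" for t
    using True by (simp add: haar_mat_def power_divide)
  then have "(\<Sum>t<2^m. (haar_mat m i t)^2) = (\<Sum>t<(2::nat)^m. 1 / 2^m)" by simp
  also have "\<dots> = 1" by simp
  finally show ?thesis by simp
next
  case False
  define j where "j = haar_level i"
  define l where "l = i - 2^j"
  define L where "L = (2::nat)^(m - j)"
  define h where "h = L div 2"
  have "2^j \<le> i" using False haar_level_props j_def by auto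
  hence "(2::nat)^j < 2^m" using assms by linarith
  hence jm: "j < m" by simp
  define c :: real where "c = 2^j / 2^m"
  have c0: "c \<ge> 0" by (simp add: c_def)
  have hL: "h \<le> L" by (simp add: h_def)
  have pt: "(haar_mat m i t)^2 \<le> (if t \<in> {l*L..<(l+1)*L} then c else 0)" for t
  proof -
    have hm: "haar_mat m i t = (if l * L \<le> t \<and> t < l * L + h then sqrt c
            else if l * L + h \<le> t \<and> t < (l + 1) * L then - sqrt c else 0)"
      using False by (simp add: haar_mat_def Let_def j_def[symmetric] l_def[symmetric] L_def[symmetric] h_def[symmetric] c_def)
    show ?thesis unfolding hm using c0 hL by auto
  qed
  define A where "A = {l*L..<(l+1)*L}"
  have "(\<Sum>t<2^m. (haar_mat m i t)^2) \<le> (\<Sum>t<2^m. (if t \<in> A then c else 0))"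
    unfolding A_def by (intro sum_mono pt)
  also have "\<dots> = c * card ({..<2^m} \<inter> A)"
    by (simp only: sum.If_cases finite_lessThan sum_constant sum.neutral_const) simp
  also have "\<dots> \<le> c * card A"
  proof -
    have "card ({..<(2::nat)^m} \<inter> A) \<le> card A" by (intro card_mono) (auto simp: A_def)
    then show ?thesis using c0 by (intro mult_left_mono) auto
  qed
  also have "\<dots> = c * L" by (simp add: A_def)
  also have "\<dots> = 1"
  proof -
    have "(2::real)^m = 2^j * 2^(m-j)" using jm by (simp flip: power_add)
    moreover have "real L = 2^(m-j)" by (simp add: L_def)
    ultimately show ?thesis by (simp add: c_def)
  qed
  finally show ?thesis .
qed



lemma alpha_eq:
  fixes H y :: "nat \<Rightarrow> real"
  assumes "n \<le> N" "n \<ge> 1"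
  shows "(\<Sum>t<N. H t * pad0 n y t) = (\<Sum>t<n. (H t - (\<Sum>s<n. H s) / real n) * y t)"
proof -
  have "(\<Sum>t<N. H t * pad0 n y t) = (\<Sum>t<n. H t * pad0 n y t)"
    using assms(1) by (intro sum.mono_neutral_right) (auto simp: pad0_def)
  also have "\<dots> = (\<Sum>t<n. H t * (y t - (\<Sum>j<n. y j) / real n))"
    by (intro sum.cong) (auto simp: pad0_def)
  also have "\<dots> = (\<Sum>t<n. H t * y t) - (\<Sum>t<n. H t) * ((\<Sum>j<n. y j) / real n)"
    by (simp only: right_diff_distrib sum_subtractf sum_distrib_right)
  also have "(\<Sum>t<n. H t) * ((\<Sum>j<n. y j) / real n) = (\<Sum>t<n. ((\<Sum>s<n. H s) / real n) * y t)"
  proof -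
    have "(\<Sum>t<n. H t) * ((\<Sum>j<n. y j) / real n) = ((\<Sum>s<n. H s) / real n) * (\<Sum>t<n. y t)"
      by simp
    also have "\<dots> = (\<Sum>t<n. ((\<Sum>s<n. H s) / real n) * y t)"
      by (rule sum_distrib_left)
    finally show ?thesis .
  qed
  also have "(\<Sum>t<n. H t * y t) - (\<Sum>t<n. ((\<Sum>s<n. H s) / real n) * y t) = (\<Sum>t<n. (H t - (\<Sum>s<n. H s) / real n) * y t)"
    by (simp only: left_diff_distrib sum_subtractf)
  finally show ?thesis .
qed

theorem lemma2:
  fixes M :: "'a measure" and z :: "nat \<Rightarrow> 'a \<Rightarrow> real" and \<theta> :: "nat \<Rightarrow> real"
    and \<sigma> :: real and n m :: nat
  assumes "prob_space M"
    and "n \<ge> 1"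
    and "prob_space.indep_vars M (\<lambda>_. borel) z {..<n}"
    and "\<And>i. i < n \<Longrightarrow> distr M borel (z i) = distr M borel (z 0)"
    and "\<And>i. i < n \<Longrightarrow> subgaussian M (z i) 1"
    and "2 ^ m = padlen n"
  shows "\<forall>i < 2 ^ m.
     (let y = (\<lambda>\<omega> j. \<theta> j + \<sigma> * z j \<omega>);
          \<alpha> = (\<lambda>\<omega>. \<Sum>t < 2 ^ m. haar_mat m i t * pad0 n (y \<omega>) t)
      in subgaussian M (\<lambda>\<omega>. \<alpha> \<omega> - (\<integral>\<omega>'. \<alpha> \<omega>' \<partial>M)) (2 * \<sigma>))"
proof (intro allI impI)
  fix i :: nat assume i: "i < 2 ^ m"
  interpret prob_space M by fact
  define H where "H t = haar_mat m i t" for t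
  define c where "c t = H t - (\<Sum>s<n. H s) / real n" for t
  define C where "C = (\<Sum>t<n. c t * \<theta> t)"
  define a where "a t = \<sigma> * c t" for t
  define \<alpha> where "\<alpha> \<omega> = (\<Sum>t < 2 ^ m. haar_mat m i t * pad0 n (\<lambda>j. \<theta> j + \<sigma> * z j \<omega>) t)" for \<omega>
  have nN: "n \<le> 2 ^ m" using assms(6) padlen_ge by metis
  have key: "\<alpha> \<omega> = C + (\<Sum>t<n. a t * z t \<omega>)" for \<omega>
  proof -
    have "\<alpha> \<omega> = (\<Sum>t<n. c t * (\<theta> t + \<sigma> * z t \<omega>))"
      unfolding \<alpha>_def H_def[symmetric] c_def by (rule alpha_eq[OF nN assms(2)])
    also have "\<dots> = C + (\<Sum>t<n. a t * z t \<omega>)"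
      by (simp add: C_def a_def distrib_left sum.distrib mult_ac)
    finally show ?thesis .
  qed
  have zi: "integrable M (z t)" "(\<integral>\<omega>. z t \<omega> \<partial>M) = 0" if "t < n" for t
    using subg_mean0[OF assms(1) assms(5)[OF that]] by auto
  have "(\<integral>\<omega>. \<alpha> \<omega> \<partial>M) = C + (\<Sum>t<n. a t * (\<integral>\<omega>. z t \<omega> \<partial>M))"
  proof -
    have ii: "integrable M (\<lambda>\<omega>. \<Sum>t<n. a t * z t \<omega>)" using zi(1) by auto
    have "(\<integral>\<omega>. \<alpha> \<omega> \<partial>M) = C + (\<integral>\<omega>. (\<Sum>t<n. a t * z t \<omega>) \<partial>M)"
      unfolding key using ii by (simp add: prob_space)
    also have "(\<integral>\<omega>. (\<Sum>t<n. a t * z t \<omega>) \<partial>M) = (\<Sum>t<n. \<integral>\<omega>. a t * z t \<omega> \<partial>M)"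
      using zi(1) by (intro Bochner_Integration.integral_sum) auto
    finally show ?thesis by simp
  qed
  also have "\<dots> = C" using zi(2) by simp
  finally have Ea: "(\<integral>\<omega>. \<alpha> \<omega> \<partial>M) = C" .
  have sq: "(\<Sum>t<n. (a t)^2) \<le> (2 * \<sigma>)^2"
  proof -
    have "(\<Sum>t<n. (c t)^2) \<le> (\<Sum>t<n. (H t)^2)"
      unfolding c_def by (rule var_le[OF assms(2)])
    also have "\<dots> \<le> (\<Sum>t<2^m. (H t)^2)"
      using nN by (intro sum_mono2) auto
    also have "\<dots> \<le> 1" unfolding H_def by (rule row_norm[OF i])
    finally have "(\<Sum>t<n. (c t)^2) \<le> 1" .
    then have "\<sigma>^2 * (\<Sum>t<n. (c t)^2) \<le> \<sigma>^2 * 4"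
      by (intro mult_left_mono) auto
    then show ?thesis by (simp add: a_def power_mult_distrib sum_distrib_left[symmetric] mult_ac)
  qed
  have SG: "subgaussian M (\<lambda>\<omega>. \<Sum>t<n. a t * z t \<omega>) (2 * \<sigma>)"
    by (rule subg_sum[OF assms(1) _ assms(3) _ sq]) (use assms(5) in auto)
  then show "let y = (\<lambda>\<omega> j. \<theta> j + \<sigma> * z j \<omega>);
          \<alpha> = (\<lambda>\<omega>. \<Sum>t < 2 ^ m. haar_mat m i t * pad0 n (y \<omega>) t)
      in subgaussian M (\<lambda>\<omega>. \<alpha> \<omega> - (\<integral>\<omega>'. \<alpha> \<omega>' \<partial>M)) (2 * \<sigma>)"
    unfolding Let_def \<alpha>_def[symmetric] Ea using SG by (simp add: key)
qed

end
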